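(* Let $M$ be a set of $5$ indivisible items. There exist strict monotone preferences $\preceq_1,\preceq_2$ over $2^M$ for two agents such that for every budget profile $(b_1,b_2)$ with $b_1,b_2>0$ and $\tfrac{4}{3}b_2>b_1>b_2$, the Fisher market with these preferences and budgets has no competitive equilibrium.
   Context: A monotone preference $\preceq_i$ is a complete and transitive weak order over all subsets of $M$ such that $S\preceq_i T$ whenever $S\subseteq T$; it is strict if for any $S\ne T$ either $S\prec_i T$ or $T\prec_i S$ (where $S\prec_i T$ means $S\preceq_i T$ and not $T\preceq_i S$). Given item prices $p=(p_j)_{j\in M}$ with $p(S)=\sum_{j\in S}p_j$, a bundle $S$ is demanded by agent $i$ with budget $b_i$ if $p(S)\le b_i$ and $p(T)>b_i$ for every $T$ with $S\prec_i T$. A competitive equilibrium is a pair $(\mathcal S,p)$ where $\mathcal S=(S_1,S_2)$ is a partition of all items of $M$ between the two agents and $p$ is a price vector, such that $S_i$ is demanded by agent $i$ at prices $p$ for each $i$. *)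

theory Defs
  imports Complex_Main
begin

(* A preference over subsets of M is a relation le :: 'a set => 'a set => bool,
   where "le S T" means S \<preceq> T.  Only bundles S \<subseteq> M matter. *)

definition strict_pref :: "('a set \<Rightarrow> 'a set \<Rightarrow> bool) \<Rightarrow> 'a set \<Rightarrow> 'a set \<Rightarrow> bool" where
  "strict_pref le S T \<longleftrightarrow> le S T \<and> \<not> le T S"

definition monotone_pref :: "'a set \<Rightarrow> ('a set \<Rightarrow> 'a set \<Rightarrow> bool) \<Rightarrow> bool" where
  "monotone_pref M le \<longleftrightarrow>
     (\<forall>S T. S \<subseteq> M \<longrightarrow> T \<subseteq> M \<longrightarrow> le S T \<or> le T S) \<and>
     (\<forall>S T U. S \<subseteq> M \<longrightarrow> T \<subseteq> M \<longrightarrow> U \<subseteq> M \<longrightarrow> le S T \<longrightarrow> le T U \<longrightarrow> le S U) \<and>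
     (\<forall>S T. T \<subseteq> M \<longrightarrow> S \<subseteq> T \<longrightarrow> le S T)"

definition strict_monotone_pref :: "'a set \<Rightarrow> ('a set \<Rightarrow> 'a set \<Rightarrow> bool) \<Rightarrow> bool" where
  "strict_monotone_pref M le \<longleftrightarrow> monotone_pref M le \<and>
     (\<forall>S T. S \<subseteq> M \<longrightarrow> T \<subseteq> M \<longrightarrow> S \<noteq> T \<longrightarrow> strict_pref le S T \<or> strict_pref le T S)"

definition price :: "('a \<Rightarrow> real) \<Rightarrow> 'a set \<Rightarrow> real" where
  "price p S = (\<Sum>j\<in>S. p j)"

definition demanded :: "'a set \<Rightarrow> ('a set \<Rightarrow> 'a set \<Rightarrow> bool) \<Rightarrow> real \<Rightarrow> ('a \<Rightarrow> real) \<Rightarrow> 'a set \<Rightarrow> bool" where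
  "demanded M le b p S \<longleftrightarrow> S \<subseteq> M \<and> price p S \<le> b \<and>
     (\<forall>T. T \<subseteq> M \<longrightarrow> strict_pref le S T \<longrightarrow> price p T > b)"

definition competitive_equilibrium ::
  "'a set \<Rightarrow> ('a set \<Rightarrow> 'a set \<Rightarrow> bool) \<Rightarrow> ('a set \<Rightarrow> 'a set \<Rightarrow> bool) \<Rightarrow> real \<Rightarrow> real
    \<Rightarrow> 'a set \<Rightarrow> 'a set \<Rightarrow> ('a \<Rightarrow> real) \<Rightarrow> bool" where
  "competitive_equilibrium M le1 le2 b1 b2 S1 S2 p \<longleftrightarrow>
     S1 \<union> S2 = M \<and> S1 \<inter> S2 = {} \<and>
     (\<forall>j\<in>M. p j \<ge> 0) \<and>
     demanded M le1 b1 p S1 \<and> demanded M le2 b2 p S2"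

end

theory Submission
  imports Defs
begin

fun F1 :: "bool \<Rightarrow> bool \<Rightarrow> bool \<Rightarrow> bool \<Rightarrow> bool \<Rightarrow> nat" where
  "F1 False False False False False = 0" |
  "F1 True False False False False = 4" |
  "F1 False True False False False = 10" |
  "F1 True True False False False = 18" |
  "F1 False False True False False = 2" |
  "F1 True False True False False = 6" |
  "F1 False True True False False = 14" |
  "F1 True True True False False = 24" |
  "F1 False False False True False = 8" |
  "F1 True False False True False = 20" |
  "F1 False True False True False = 15" |
  "F1 True True False True False = 22" |
  "F1 False False True True False = 9" |
  "F1 True False True True False = 27" |
  "F1 False True True True False = 16" |
  "F1 True True True True False = 30" |
  "F1 False False False False True = 1" |
  "F1 True False False False True = 5" |
  "F1 False True False False True = 12" |
  "F1 True True False False True = 19" |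
  "F1 False False True False True = 3" |
  "F1 True False True False True = 7" |
  "F1 False True True False True = 25" |
  "F1 True True True False True = 26" |
  "F1 False False False True True = 11" |
  "F1 True False False True True = 21" |
  "F1 False True False True True = 17" |
  "F1 True True False True True = 23" |
  "F1 False False True True True = 13" |
  "F1 True False True True True = 29" |
  "F1 False True True True True = 28" |
  "F1 True True True True True = 31"

fun F2 :: "bool \<Rightarrow> bool \<Rightarrow> bool \<Rightarrow> bool \<Rightarrow> bool \<Rightarrow> nat" where
  "F2 False False False False False = 0" |
  "F2 True False False False False = 5" |
  "F2 False True False False False = 7" |
  "F2 True True False False False = 24" |
  "F2 False False True False False = 2" |
  "F2 True False True False False = 6" |
  "F2 False True True False False = 14" |
  "F2 True True True False False = 27" |
  "F2 False False False True False = 1" |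
  "F2 True False False True False = 8" |
  "F2 False True False True False = 11" |
  "F2 True True False True False = 25" |
  "F2 False False True True False = 17" |
  "F2 True False True True False = 20" |
  "F2 False True True True False = 22" |
  "F2 True True True True False = 30" |
  "F2 False False False False True = 3" |
  "F2 True False False False True = 12" |
  "F2 False True False False True = 9" |
  "F2 True True False False True = 26" |
  "F2 False False True False True = 4" |
  "F2 True False True False True = 19" |
  "F2 False True True False True = 16" |
  "F2 True True True False True = 29" |
  "F2 False False False True True = 10" |
  "F2 True False False True True = 15" |
  "F2 False True False True True = 13" |
  "F2 True True False True True = 28" |
  "F2 False False True True True = 18" |
  "F2 True False True True True = 21" |
  "F2 False True True True True = 23" |
  "F2 True True True True True = 31"

lemma smp:
  fixes F :: "bool \<Rightarrow> bool \<Rightarrow> bool \<Rightarrow> bool \<Rightarrow> bool \<Rightarrow> nat"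
  assumes M: "M = {a,b,c,d,e}"
  and mono: "\<And>x0 x1 x2 x3 x4 y0 y1 y2 y3 y4. (x0 \<longrightarrow> y0) \<Longrightarrow> (x1 \<longrightarrow> y1) \<Longrightarrow> (x2 \<longrightarrow> y2) \<Longrightarrow> (x3 \<longrightarrow> y3) \<Longrightarrow> (x4 \<longrightarrow> y4) \<Longrightarrow> F x0 x1 x2 x3 x4 \<le> F y0 y1 y2 y3 y4"
  and inj: "\<And>x0 x1 x2 x3 x4 y0 y1 y2 y3 y4. F x0 x1 x2 x3 x4 = F y0 y1 y2 y3 y4 \<Longrightarrow> x0 = y0 \<and> x1 = y1 \<and> x2 = y2 \<and> x3 = y3 \<and> x4 = y4"
  shows "strict_monotone_pref M (\<lambda>S T. F (a\<in>S) (b\<in>S) (c\<in>S) (d\<in>S) (e\<in>S) \<le> F (a\<in>T) (b\<in>T) (c\<in>T) (d\<in>T) (e\<in>T))"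
proof -
  define g where "g S = F (a\<in>S) (b\<in>S) (c\<in>S) (d\<in>S) (e\<in>S)" for S
  have eq: "(\<lambda>S T. F (a\<in>S) (b\<in>S) (c\<in>S) (d\<in>S) (e\<in>S) \<le> F (a\<in>T) (b\<in>T) (c\<in>T) (d\<in>T) (e\<in>T)) = (\<lambda>S T. g S \<le> g T)"
    by (simp add: g_def)
  have mono': "g S \<le> g T" if "S \<subseteq> T" for S T
    unfolding g_def by (rule mono) (use that in auto)
  have inj': "S = T" if "S \<subseteq> M" "T \<subseteq> M" "g S = g T" for S T
  proof -
    have "(a\<in>S) = (a\<in>T) \<and> (b\<in>S) = (b\<in>T) \<and> (c\<in>S) = (c\<in>T) \<and> (d\<in>S) = (d\<in>T) \<and> (e\<in>S) = (e\<in>T)"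
      by (rule inj) (use that in \<open>simp add: g_def\<close>)
    then show "S = T" using that M by blast
  qed
  show ?thesis unfolding eq strict_monotone_pref_def monotone_pref_def strict_pref_def
    using mono' inj' by (auto intro: order_trans) (metis inj')+
qed


lemma F1_mono: "(x0 \<longrightarrow> y0) \<Longrightarrow> (x1 \<longrightarrow> y1) \<Longrightarrow> (x2 \<longrightarrow> y2) \<Longrightarrow> (x3 \<longrightarrow> y3) \<Longrightarrow> (x4 \<longrightarrow> y4) \<Longrightarrow> F1 x0 x1 x2 x3 x4 \<le> F1 y0 y1 y2 y3 y4"
  by (cases x0; cases y0; cases x1; cases y1; cases x2; cases y2; cases x3; cases y3; cases x4; cases y4; simp)

lemma F2_mono: "(x0 \<longrightarrow> y0) \<Longrightarrow> (x1 \<longrightarrow> y1) \<Longrightarrow> (x2 \<longrightarrow> y2) \<Longrightarrow> (x3 \<longrightarrow> y3) \<Longrightarrow> (x4 \<longrightarrow> y4) \<Longrightarrow> F2 x0 x1 x2 x3 x4 \<le> F2 y0 y1 y2 y3 y4"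
  by (cases x0; cases y0; cases x1; cases y1; cases x2; cases y2; cases x3; cases y3; cases x4; cases y4; simp)

lemma F1_inj: "F1 x0 x1 x2 x3 x4 = F1 y0 y1 y2 y3 y4 \<Longrightarrow> x0 = y0 \<and> x1 = y1 \<and> x2 = y2 \<and> x3 = y3 \<and> x4 = y4"
  by (cases x0; cases y0; cases x1; cases y1; cases x2; cases y2; cases x3; cases y3; cases x4; cases y4; simp)

lemma F2_inj: "F2 x0 x1 x2 x3 x4 = F2 y0 y1 y2 y3 y4 \<Longrightarrow> x0 = y0 \<and> x1 = y1 \<and> x2 = y2 \<and> x3 = y3 \<and> x4 = y4"
  by (cases x0; cases y0; cases x1; cases y1; cases x2; cases y2; cases x3; cases y3; cases x4; cases y4; simp)

lemma price5:
  assumes M: "M = {a,b,c,d,e}" and ne: "a \<noteq> b" "a \<noteq> c" "a \<noteq> d" "a \<noteq> e" "b \<noteq> a" "b \<noteq> c" "b \<noteq> d" "b \<noteq> e" "c \<noteq> a" "c \<noteq> b" "c \<noteq> d" "c \<noteq> e" "d \<noteq> a" "d \<noteq> b" "d \<noteq> c" "d \<noteq> e" "e \<noteq> a" "e \<noteq> b" "e \<noteq> c" "e \<noteq> d" and T: "T \<subseteq> M"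
  shows "price p T = (if a\<in>T then p a else 0) + (if b\<in>T then p b else 0) + (if c\<in>T then p c else 0) + (if d\<in>T then p d else 0) + (if e\<in>T then p e else 0)"
proof -
  have "T = M \<inter> T" using T by blast
  then have "price p T = sum p (M \<inter> T)" unfolding price_def by simp
  also have "\<dots> = (\<Sum>j\<in>M. if j \<in> T then p j else 0)"
    by (rule sum.inter_restrict) (simp add: M)
  also have "\<dots> = (if a\<in>T then p a else 0) + (if b\<in>T then p b else 0) + (if c\<in>T then p c else 0) + (if d\<in>T then p d else 0) + (if e\<in>T then p e else 0)"
    using ne by (simp add: M)
  finally show ?thesis .
qed

lemma five_elems:
  assumes "finite M" and "card M = 5"
  shows "\<exists>a b c d e. M = {a,b,c,d,e} \<and> distinct [a,b,c,d,e]"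
proof -
  obtain xs where xs: "set xs = M" "distinct xs" using finite_distinct_list[OF assms(1)] by blast
  then have "length xs = 5" using assms(2) distinct_card by fastforce
  then obtain a b c d e where "xs = [a,b,c,d,e]"
    by (auto simp: numeral_eq_Suc length_Suc_conv)
  then have "M = {a,b,c,d,e}" "distinct [a,b,c,d,e]" using xs by auto
  then show ?thesis by blast
qed

theorem mainTheorem3:
  fixes M :: "'a set"
  assumes "finite M" and "card M = 5"
  shows "\<exists>le1 le2. strict_monotone_pref M le1 \<and> strict_monotone_pref M le2 \<and>
           (\<forall>b1 b2 :: real. b1 > 0 \<longrightarrow> b2 > 0 \<longrightarrow> (4/3) * b2 > b1 \<longrightarrow> b1 > b2 \<longrightarrow>
              \<not> (\<exists>S1 S2 p. competitive_equilibrium M le1 le2 b1 b2 S1 S2 p))"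
proof -
  obtain a b c d e where M: "M = {a,b,c,d,e}" and dist: "distinct [a,b,c,d,e]"
    using five_elems[OF assms] by blast
  have ne: "a \<noteq> b" "a \<noteq> c" "a \<noteq> d" "a \<noteq> e" "b \<noteq> a" "b \<noteq> c" "b \<noteq> d" "b \<noteq> e" "c \<noteq> a" "c \<noteq> b" "c \<noteq> d" "c \<noteq> e" "d \<noteq> a" "d \<noteq> b" "d \<noteq> c" "d \<noteq> e" "e \<noteq> a" "e \<noteq> b" "e \<noteq> c" "e \<noteq> d" using dist by auto
  define le1 where "le1 = (\<lambda>S T. F1 (a\<in>S) (b\<in>S) (c\<in>S) (d\<in>S) (e\<in>S) \<le> F1 (a\<in>T) (b\<in>T) (c\<in>T) (d\<in>T) (e\<in>T))"
  define le2 where "le2 = (\<lambda>S T. F2 (a\<in>S) (b\<in>S) (c\<in>S) (d\<in>S) (e\<in>S) \<le> F2 (a\<in>T) (b\<in>T) (c\<in>T) (d\<in>T) (e\<in>T))"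
  show ?thesis
  proof (rule exI[of _ le1], rule exI[of _ le2], intro conjI allI impI notI)
    show "strict_monotone_pref M le1" unfolding le1_def
      by (rule smp[OF M F1_mono F1_inj])
    show "strict_monotone_pref M le2" unfolding le2_def
      by (rule smp[OF M F2_mono F2_inj])
    fix b1 b2 :: real
    assume hb: "b1 > 0" "b2 > 0" "(4/3) * b2 > b1" "b1 > b2"
    assume "\<exists>S1 S2 p. competitive_equilibrium M le1 le2 b1 b2 S1 S2 p"
    then obtain S1 S2 p where ce: "competitive_equilibrium M le1 le2 b1 b2 S1 S2 p"
      by blast
    have U: "S1 \<union> S2 = M" and I: "S1 \<inter> S2 = {}" and nn0: "\<forall>j\<in>M. p j \<ge> 0"
      and dm1: "demanded M le1 b1 p S1" and dm2: "demanded M le2 b2 p S2"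
      using ce unfolding competitive_equilibrium_def by blast+
    have S1M: "S1 \<subseteq> M" and S2M: "S2 \<subseteq> M" using U by auto
    have S2mem: "x \<in> S2 \<longleftrightarrow> x \<notin> S1" if "x \<in> M" for x using U I that by blast
    have nn: "p a \<ge> 0" "p b \<ge> 0" "p c \<ge> 0" "p d \<ge> 0" "p e \<ge> 0" using nn0 M by auto
    have pb1: "price p S1 \<le> b1" using dm1 unfolding demanded_def by blast
    have pb2: "price p S2 \<le> b2" using dm2 unfolding demanded_def by blast
    have D1: "\<forall>T. T \<subseteq> M \<longrightarrow> F1 (a\<in>S1) (b\<in>S1) (c\<in>S1) (d\<in>S1) (e\<in>S1) < F1 (a\<in>T) (b\<in>T) (c\<in>T) (d\<in>T) (e\<in>T) \<longrightarrow> b1 < price p T"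
    proof (intro allI impI)
      fix T assume T: "T \<subseteq> M" and lt: "F1 (a\<in>S1) (b\<in>S1) (c\<in>S1) (d\<in>S1) (e\<in>S1) < F1 (a\<in>T) (b\<in>T) (c\<in>T) (d\<in>T) (e\<in>T)"
      have "strict_pref le1 S1 T" unfolding strict_pref_def le1_def using lt by simp
      then show "b1 < price p T" using dm1 T unfolding demanded_def by blast
    qed
    have D2': "\<forall>T. T \<subseteq> M \<longrightarrow> F2 (a\<in>S2) (b\<in>S2) (c\<in>S2) (d\<in>S2) (e\<in>S2) < F2 (a\<in>T) (b\<in>T) (c\<in>T) (d\<in>T) (e\<in>T) \<longrightarrow> b2 < price p T"
    proof (intro allI impI)
      fix T assume T: "T \<subseteq> M" and lt: "F2 (a\<in>S2) (b\<in>S2) (c\<in>S2) (d\<in>S2) (e\<in>S2) < F2 (a\<in>T) (b\<in>T) (c\<in>T) (d\<in>T) (e\<in>T)"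
      have "strict_pref le2 S2 T" unfolding strict_pref_def le2_def using lt by simp
      then show "b2 < price p T" using dm2 T unfolding demanded_def by blast
    qed
    have mem2: "(a\<in>S2) = (a\<notin>S1)" "(b\<in>S2) = (b\<notin>S1)" "(c\<in>S2) = (c\<notin>S1)" "(d\<in>S2) = (d\<notin>S1)" "(e\<in>S2) = (e\<notin>S1)"
      using S2mem M by auto
    have D2: "\<forall>T. T \<subseteq> M \<longrightarrow> F2 (a\<notin>S1) (b\<notin>S1) (c\<notin>S1) (d\<notin>S1) (e\<notin>S1) < F2 (a\<in>T) (b\<in>T) (c\<in>T) (d\<in>T) (e\<in>T) \<longrightarrow> b2 < price p T"
      using D2' unfolding mem2 .
    have Bud1: "(if a\<in>S1 then p a else 0) + (if b\<in>S1 then p b else 0) + (if c\<in>S1 then p c else 0) + (if d\<in>S1 then p d else 0) + (if e\<in>S1 then p e else 0) \<le> b1"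
      using pb1 unfolding price5[OF M ne S1M, of p] .
    have Bud2: "(if a\<notin>S1 then p a else 0) + (if b\<notin>S1 then p b else 0) + (if c\<notin>S1 then p c else 0) + (if d\<notin>S1 then p d else 0) + (if e\<notin>S1 then p e else 0) \<le> b2"
      using pb2 unfolding price5[OF M ne S2M, of p] mem2 .
    have A1: "F1 (a\<in>S1) (b\<in>S1) (c\<in>S1) (d\<in>S1) (e\<in>S1) < 4 \<longrightarrow> b1 < p a"
      using D1[rule_format, of "{a}"] by (simp add: M ne price_def add.assoc)
    have A2: "F1 (a\<in>S1) (b\<in>S1) (c\<in>S1) (d\<in>S1) (e\<in>S1) < 10 \<longrightarrow> b1 < p b"
      using D1[rule_format, of "{b}"] by (simp add: M ne price_def add.assoc)
    have A3: "F1 (a\<in>S1) (b\<in>S1) (c\<in>S1) (d\<in>S1) (e\<in>S1) < 18 \<longrightarrow> b1 < p a + p b"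
      using D1[rule_format, of "{a, b}"] by (simp add: M ne price_def add.assoc)
    have A9: "F1 (a\<in>S1) (b\<in>S1) (c\<in>S1) (d\<in>S1) (e\<in>S1) < 20 \<longrightarrow> b1 < p a + p d"
      using D1[rule_format, of "{a, d}"] by (simp add: M ne price_def add.assoc)
    have A13: "F1 (a\<in>S1) (b\<in>S1) (c\<in>S1) (d\<in>S1) (e\<in>S1) < 27 \<longrightarrow> b1 < p a + p c + p d"
      using D1[rule_format, of "{a, c, d}"] by (simp add: M ne price_def add.assoc)
    have A22: "F1 (a\<in>S1) (b\<in>S1) (c\<in>S1) (d\<in>S1) (e\<in>S1) < 25 \<longrightarrow> b1 < p b + p c + p e"
      using D1[rule_format, of "{b, c, e}"] by (simp add: M ne price_def add.assoc)
    have A29: "F1 (a\<in>S1) (b\<in>S1) (c\<in>S1) (d\<in>S1) (e\<in>S1) < 29 \<longrightarrow> b1 < p a + p c + p d + p e"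
      using D1[rule_format, of "{a, c, d, e}"] by (simp add: M ne price_def add.assoc)
    have A30: "F1 (a\<in>S1) (b\<in>S1) (c\<in>S1) (d\<in>S1) (e\<in>S1) < 28 \<longrightarrow> b1 < p b + p c + p d + p e"
      using D1[rule_format, of "{b, c, d, e}"] by (simp add: M ne price_def add.assoc)
    have B1: "F2 (a\<notin>S1) (b\<notin>S1) (c\<notin>S1) (d\<notin>S1) (e\<notin>S1) < 5 \<longrightarrow> b2 < p a"
      using D2[rule_format, of "{a}"] by (simp add: M ne price_def add.assoc)
    have B2: "F2 (a\<notin>S1) (b\<notin>S1) (c\<notin>S1) (d\<notin>S1) (e\<notin>S1) < 7 \<longrightarrow> b2 < p b"
      using D2[rule_format, of "{b}"] by (simp add: M ne price_def add.assoc)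
    have B3: "F2 (a\<notin>S1) (b\<notin>S1) (c\<notin>S1) (d\<notin>S1) (e\<notin>S1) < 24 \<longrightarrow> b2 < p a + p b"
      using D2[rule_format, of "{a, b}"] by (simp add: M ne price_def add.assoc)
    have B6: "F2 (a\<notin>S1) (b\<notin>S1) (c\<notin>S1) (d\<notin>S1) (e\<notin>S1) < 14 \<longrightarrow> b2 < p b + p c"
      using D2[rule_format, of "{b, c}"] by (simp add: M ne price_def add.assoc)
    have B9: "F2 (a\<notin>S1) (b\<notin>S1) (c\<notin>S1) (d\<notin>S1) (e\<notin>S1) < 8 \<longrightarrow> b2 < p a + p d"
      using D2[rule_format, of "{a, d}"] by (simp add: M ne price_def add.assoc)
    have B10: "F2 (a\<notin>S1) (b\<notin>S1) (c\<notin>S1) (d\<notin>S1) (e\<notin>S1) < 11 \<longrightarrow> b2 < p b + p d"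
      using D2[rule_format, of "{b, d}"] by (simp add: M ne price_def add.assoc)
    have B12: "F2 (a\<notin>S1) (b\<notin>S1) (c\<notin>S1) (d\<notin>S1) (e\<notin>S1) < 17 \<longrightarrow> b2 < p c + p d"
      using D2[rule_format, of "{c, d}"] by (simp add: M ne price_def add.assoc)
    have B17: "F2 (a\<notin>S1) (b\<notin>S1) (c\<notin>S1) (d\<notin>S1) (e\<notin>S1) < 12 \<longrightarrow> b2 < p a + p e"
      using D2[rule_format, of "{a, e}"] by (simp add: M ne price_def add.assoc)
    have C0: False if h: "a \<notin> S1" "b \<notin> S1" "c \<notin> S1" "d \<notin> S1" "e \<notin> S1"
    proof -
      have x0: "b1 < p a" using A1 h by simp
      have y1: "0 \<le> b1" using Bud1 h by simp
      have y2: "p a + p b + p c + p d + p e \<le> b2" using Bud2 h by simp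
      show False using x0 y1 y2 nn hb by linarith
    qed
    have C1: False if h: "a \<in> S1" "b \<notin> S1" "c \<notin> S1" "d \<notin> S1" "e \<notin> S1"
    proof -
      have x0: "b1 < p b" using A2 h by simp
      have y1: "p a \<le> b1" using Bud1 h by simp
      have y2: "p b + p c + p d + p e \<le> b2" using Bud2 h by simp
      show False using x0 y1 y2 nn hb by linarith
    qed
    have C2: False if h: "a \<notin> S1" "b \<in> S1" "c \<notin> S1" "d \<notin> S1" "e \<notin> S1"
    proof -
      have x0: "b1 < p a + p d" using A9 h by simp
      have y1: "p b \<le> b1" using Bud1 h by simp
      have y2: "p a + p c + p d + p e \<le> b2" using Bud2 h by simp
      show False using x0 y1 y2 nn hb by linarith
    qed
    have C3: False if h: "a \<in> S1" "b \<in> S1" "c \<notin> S1" "d \<notin> S1" "e \<notin> S1"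
    proof -
      have x0: "b1 < p a + p d" using A9 h by simp
      have x1: "b1 < p b + p c + p e" using A22 h by simp
      have y1: "p a + p b \<le> b1" using Bud1 h by simp
      have y2: "p c + p d + p e \<le> b2" using Bud2 h by simp
      show False using x0 x1 y1 y2 nn hb by linarith
    qed
    have C4: False if h: "a \<notin> S1" "b \<notin> S1" "c \<in> S1" "d \<notin> S1" "e \<notin> S1"
    proof -
      have x0: "b1 < p a" using A1 h by simp
      have y1: "p c \<le> b1" using Bud1 h by simp
      have y2: "p a + p b + p d + p e \<le> b2" using Bud2 h by simp
      show False using x0 y1 y2 nn hb by linarith
    qed
    have C5: False if h: "a \<in> S1" "b \<notin> S1" "c \<in> S1" "d \<notin> S1" "e \<notin> S1"
    proof -
      have x0: "b1 < p b" using A2 h by simp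
      have y1: "p a + p c \<le> b1" using Bud1 h by simp
      have y2: "p b + p d + p e \<le> b2" using Bud2 h by simp
      show False using x0 y1 y2 nn hb by linarith
    qed
    have C6: False if h: "a \<notin> S1" "b \<in> S1" "c \<in> S1" "d \<notin> S1" "e \<notin> S1"
    proof -
      have x0: "b1 < p a + p d" using A9 h by simp
      have y1: "p b + p c \<le> b1" using Bud1 h by simp
      have y2: "p a + p d + p e \<le> b2" using Bud2 h by simp
      show False using x0 y1 y2 nn hb by linarith
    qed
    have C7: False if h: "a \<in> S1" "b \<in> S1" "c \<in> S1" "d \<notin> S1" "e \<notin> S1"
    proof -
      have x0: "b1 < p a + p c + p d" using A13 h by simp
      have x1: "b1 < p b + p c + p e" using A22 h by simp
      have x2: "b2 < p a + p b" using B3 h by simp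
      have y1: "p a + p b + p c \<le> b1" using Bud1 h by simp
      have y2: "p d + p e \<le> b2" using Bud2 h by simp
      show False using x0 x1 x2 y1 y2 nn hb by linarith
    qed
    have C8: False if h: "a \<notin> S1" "b \<notin> S1" "c \<notin> S1" "d \<in> S1" "e \<notin> S1"
    proof -
      have x0: "b1 < p b" using A2 h by simp
      have y1: "p d \<le> b1" using Bud1 h by simp
      have y2: "p a + p b + p c + p e \<le> b2" using Bud2 h by simp
      show False using x0 y1 y2 nn hb by linarith
    qed
    have C9: False if h: "a \<in> S1" "b \<notin> S1" "c \<notin> S1" "d \<in> S1" "e \<notin> S1"
    proof -
      have x0: "b1 < p b + p c + p e" using A22 h by simp
      have y1: "p a + p d \<le> b1" using Bud1 h by simp
      have y2: "p b + p c + p e \<le> b2" using Bud2 h by simp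
      show False using x0 y1 y2 nn hb by linarith
    qed
    have C10: False if h: "a \<notin> S1" "b \<in> S1" "c \<notin> S1" "d \<in> S1" "e \<notin> S1"
    proof -
      have x0: "b1 < p a + p d" using A9 h by simp
      have x1: "b1 < p b + p c + p e" using A22 h by simp
      have y1: "p b + p d \<le> b1" using Bud1 h by simp
      have y2: "p a + p c + p e \<le> b2" using Bud2 h by simp
      show False using x0 x1 y1 y2 nn hb by linarith
    qed
    have C11: False if h: "a \<in> S1" "b \<in> S1" "c \<notin> S1" "d \<in> S1" "e \<notin> S1"
    proof -
      have x0: "b1 < p b + p c + p e" using A22 h by simp
      have x1: "b2 < p a" using B1 h by simp
      have y1: "p a + p b + p d \<le> b1" using Bud1 h by simp
      have y2: "p c + p e \<le> b2" using Bud2 h by simp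
      show False using x0 x1 y1 y2 nn hb by linarith
    qed
    have C12: False if h: "a \<notin> S1" "b \<notin> S1" "c \<in> S1" "d \<in> S1" "e \<notin> S1"
    proof -
      have x0: "b1 < p b" using A2 h by simp
      have y1: "p c + p d \<le> b1" using Bud1 h by simp
      have y2: "p a + p b + p e \<le> b2" using Bud2 h by simp
      show False using x0 y1 y2 nn hb by linarith
    qed
    have C13: False if h: "a \<in> S1" "b \<notin> S1" "c \<in> S1" "d \<in> S1" "e \<notin> S1"
    proof -
      have x0: "b1 < p a + p c + p d + p e" using A29 h by simp
      have x1: "b2 < p a + p b" using B3 h by simp
      have x2: "b2 < p c + p d" using B12 h by simp
      have x3: "b2 < p a + p e" using B17 h by simp
      have y1: "p a + p c + p d \<le> b1" using Bud1 h by simp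
      have y2: "p b + p e \<le> b2" using Bud2 h by simp
      show False using x0 x1 x2 x3 y1 y2 nn hb by linarith
    qed
    have C14: False if h: "a \<notin> S1" "b \<in> S1" "c \<in> S1" "d \<in> S1" "e \<notin> S1"
    proof -
      have x0: "b1 < p a + p d" using A9 h by simp
      have x1: "b1 < p b + p c + p e" using A22 h by simp
      have y1: "p b + p c + p d \<le> b1" using Bud1 h by simp
      have y2: "p a + p e \<le> b2" using Bud2 h by simp
      show False using x0 x1 y1 y2 nn hb by linarith
    qed
    have C15: False if h: "a \<in> S1" "b \<in> S1" "c \<in> S1" "d \<in> S1" "e \<notin> S1"
    proof -
      have x0: "b2 < p a" using B1 h by simp
      have x1: "b2 < p b" using B2 h by simp
      have y1: "p a + p b + p c + p d \<le> b1" using Bud1 h by simp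
      have y2: "p e \<le> b2" using Bud2 h by simp
      show False using x0 x1 y1 y2 nn hb by linarith
    qed
    have C16: False if h: "a \<notin> S1" "b \<notin> S1" "c \<notin> S1" "d \<notin> S1" "e \<in> S1"
    proof -
      have x0: "b1 < p a" using A1 h by simp
      have y1: "p e \<le> b1" using Bud1 h by simp
      have y2: "p a + p b + p c + p d \<le> b2" using Bud2 h by simp
      show False using x0 y1 y2 nn hb by linarith
    qed
    have C17: False if h: "a \<in> S1" "b \<notin> S1" "c \<notin> S1" "d \<notin> S1" "e \<in> S1"
    proof -
      have x0: "b1 < p b" using A2 h by simp
      have y1: "p a + p e \<le> b1" using Bud1 h by simp
      have y2: "p b + p c + p d \<le> b2" using Bud2 h by simp
      show False using x0 y1 y2 nn hb by linarith
    qed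
    have C18: False if h: "a \<notin> S1" "b \<in> S1" "c \<notin> S1" "d \<notin> S1" "e \<in> S1"
    proof -
      have x0: "b1 < p a + p d" using A9 h by simp
      have y1: "p b + p e \<le> b1" using Bud1 h by simp
      have y2: "p a + p c + p d \<le> b2" using Bud2 h by simp
      show False using x0 y1 y2 nn hb by linarith
    qed
    have C19: False if h: "a \<in> S1" "b \<in> S1" "c \<notin> S1" "d \<notin> S1" "e \<in> S1"
    proof -
      have x0: "b1 < p a + p d" using A9 h by simp
      have x1: "b1 < p b + p c + p e" using A22 h by simp
      have y1: "p a + p b + p e \<le> b1" using Bud1 h by simp
      have y2: "p c + p d \<le> b2" using Bud2 h by simp
      show False using x0 x1 y1 y2 nn hb by linarith
    qed
    have C20: False if h: "a \<notin> S1" "b \<notin> S1" "c \<in> S1" "d \<notin> S1" "e \<in> S1"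
    proof -
      have x0: "b1 < p a" using A1 h by simp
      have y1: "p c + p e \<le> b1" using Bud1 h by simp
      have y2: "p a + p b + p d \<le> b2" using Bud2 h by simp
      show False using x0 y1 y2 nn hb by linarith
    qed
    have C21: False if h: "a \<in> S1" "b \<notin> S1" "c \<in> S1" "d \<notin> S1" "e \<in> S1"
    proof -
      have x0: "b1 < p b" using A2 h by simp
      have y1: "p a + p c + p e \<le> b1" using Bud1 h by simp
      have y2: "p b + p d \<le> b2" using Bud2 h by simp
      show False using x0 y1 y2 nn hb by linarith
    qed
    have C22: False if h: "a \<notin> S1" "b \<in> S1" "c \<in> S1" "d \<notin> S1" "e \<in> S1"
    proof -
      have x0: "b2 < p a + p b" using B3 h by simp
      have x1: "b2 < p b + p d" using B10 h by simp
      have x2: "b2 < p c + p d" using B12 h by simp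
      have x3: "b2 < p a + p e" using B17 h by simp
      have y1: "p b + p c + p e \<le> b1" using Bud1 h by simp
      have y2: "p a + p d \<le> b2" using Bud2 h by simp
      show False using x0 x1 x2 x3 y1 y2 nn hb by linarith
    qed
    have C23: False if h: "a \<in> S1" "b \<in> S1" "c \<in> S1" "d \<notin> S1" "e \<in> S1"
    proof -
      have x0: "b1 < p b + p c + p d + p e" using A30 h by simp
      have x1: "b2 < p a" using B1 h by simp
      have y1: "p a + p b + p c + p e \<le> b1" using Bud1 h by simp
      have y2: "p d \<le> b2" using Bud2 h by simp
      show False using x0 x1 y1 y2 nn hb by linarith
    qed
    have C24: False if h: "a \<notin> S1" "b \<notin> S1" "c \<notin> S1" "d \<in> S1" "e \<in> S1"
    proof -
      have x0: "b1 < p a + p b" using A3 h by simp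
      have y1: "p d + p e \<le> b1" using Bud1 h by simp
      have y2: "p a + p b + p c \<le> b2" using Bud2 h by simp
      show False using x0 y1 y2 nn hb by linarith
    qed
    have C25: False if h: "a \<in> S1" "b \<notin> S1" "c \<notin> S1" "d \<in> S1" "e \<in> S1"
    proof -
      have x0: "b1 < p b + p c + p e" using A22 h by simp
      have x1: "b2 < p a + p b" using B3 h by simp
      have x2: "b2 < p c + p d" using B12 h by simp
      have y1: "p a + p d + p e \<le> b1" using Bud1 h by simp
      have y2: "p b + p c \<le> b2" using Bud2 h by simp
      show False using x0 x1 x2 y1 y2 nn hb by linarith
    qed
    have C26: False if h: "a \<notin> S1" "b \<in> S1" "c \<notin> S1" "d \<in> S1" "e \<in> S1"
    proof -
      have x0: "b1 < p a + p d" using A9 h by simp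
      have x1: "b1 < p b + p c + p e" using A22 h by simp
      have y1: "p b + p d + p e \<le> b1" using Bud1 h by simp
      have y2: "p a + p c \<le> b2" using Bud2 h by simp
      show False using x0 x1 y1 y2 nn hb by linarith
    qed
    have C27: False if h: "a \<in> S1" "b \<in> S1" "c \<notin> S1" "d \<in> S1" "e \<in> S1"
    proof -
      have x0: "b1 < p b + p c + p e" using A22 h by simp
      have x1: "b2 < p a" using B1 h by simp
      have y1: "p a + p b + p d + p e \<le> b1" using Bud1 h by simp
      have y2: "p c \<le> b2" using Bud2 h by simp
      show False using x0 x1 y1 y2 nn hb by linarith
    qed
    have C28: False if h: "a \<notin> S1" "b \<notin> S1" "c \<in> S1" "d \<in> S1" "e \<in> S1"
    proof -
      have x0: "b1 < p a + p b" using A3 h by simp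
      have y1: "p c + p d + p e \<le> b1" using Bud1 h by simp
      have y2: "p a + p b \<le> b2" using Bud2 h by simp
      show False using x0 y1 y2 nn hb by linarith
    qed
    have C29: False if h: "a \<in> S1" "b \<notin> S1" "c \<in> S1" "d \<in> S1" "e \<in> S1"
    proof -
      have x0: "b2 < p b + p c" using B6 h by simp
      have x1: "b2 < p a + p d" using B9 h by simp
      have x2: "b2 < p c + p d" using B12 h by simp
      have x3: "b2 < p a + p e" using B17 h by simp
      have y1: "p a + p c + p d + p e \<le> b1" using Bud1 h by simp
      have y2: "p b \<le> b2" using Bud2 h by simp
      show False using x0 x1 x2 x3 y1 y2 nn hb by linarith
    qed
    have C30: False if h: "a \<notin> S1" "b \<in> S1" "c \<in> S1" "d \<in> S1" "e \<in> S1"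
    proof -
      have x0: "b1 < p a + p c + p d + p e" using A29 h by simp
      have x1: "b2 < p b" using B2 h by simp
      have y1: "p b + p c + p d + p e \<le> b1" using Bud1 h by simp
      have y2: "p a \<le> b2" using Bud2 h by simp
      show False using x0 x1 y1 y2 nn hb by linarith
    qed
    have C31: False if h: "a \<in> S1" "b \<in> S1" "c \<in> S1" "d \<in> S1" "e \<in> S1"
    proof -
      have x0: "b2 < p a" using B1 h by simp
      have x1: "b2 < p b" using B2 h by simp
      have y1: "p a + p b + p c + p d + p e \<le> b1" using Bud1 h by simp
      have y2: "0 \<le> b2" using Bud2 h by simp
      show False using x0 x1 y1 y2 nn hb by linarith
    qed
    show False
      apply (cases "a\<in>S1"; cases "b\<in>S1"; cases "c\<in>S1"; cases "d\<in>S1"; cases "e\<in>S1")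
      apply (rule C31; assumption)
      apply (rule C15; assumption)
      apply (rule C23; assumption)
      apply (rule C7; assumption)
      apply (rule C27; assumption)
      apply (rule C11; assumption)
      apply (rule C19; assumption)
      apply (rule C3; assumption)
      apply (rule C29; assumption)
      apply (rule C13; assumption)
      apply (rule C21; assumption)
      apply (rule C5; assumption)
      apply (rule C25; assumption)
      apply (rule C9; assumption)
      apply (rule C17; assumption)
      apply (rule C1; assumption)
      apply (rule C30; assumption)
      apply (rule C14; assumption)
      apply (rule C22; assumption)
      apply (rule C6; assumption)
      apply (rule C26; assumption)
      apply (rule C10; assumption)
      apply (rule C18; assumption)
      apply (rule C2; assumption)
      apply (rule C28; assumption)
      apply (rule C12; assumption)
      apply (rule C20; assumption)
      apply (rule C4; assumption)
      apply (rule C24; assumption)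
      apply (rule C8; assumption)
      apply (rule C16; assumption)
      apply (rule C0; assumption)
      done
  qed
qed


end
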